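(* Let $A$ be a real block tridiagonal matrix with square diagonal blocks $A_{11},\dots,A_{nn}$ ($n\ge2$), off-diagonal blocks $A_{i,i+1},A_{i+1,i}$ ($i=1,\dots,n-1$) and all other blocks zero. Suppose $A_{11}>0$, $A_{nn}>0$, and for every $i=1,\dots,n-1$ $$\begin{pmatrix}A_{ii}&2A_{i,i+1}\\2A_{i+1,i}&A_{i+1,i+1}\end{pmatrix}>0.$$ Then $A>0$.
   Context: For a real square (not necessarily symmetric) matrix $M$, $M>0$ means $\mathbf{y}^\top M\mathbf{y}>0$ for all nonzero real vectors $\mathbf{y}$. *)

theory Defs
  imports "Jordan_Normal_Form.Matrix"
begin

text \<open>Positive definiteness in the paper's sense (M need not be symmetric):
  M is square and y^T M y > 0 for every nonzero real vector y.\<close>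
definition pos_def :: "real mat \<Rightarrow> bool" where
  "pos_def M \<longleftrightarrow> dim_row M = dim_col M \<and>
     (\<forall>y \<in> carrier_vec (dim_row M). y \<noteq> 0\<^sub>v (dim_row M) \<longrightarrow> y \<bullet> (M *\<^sub>v y) > 0)"

text \<open>Block partition with block sizes d 1, ..., d n (blocks indexed from 1).
  blk_off d i is the index offset of block i; blk A d i j is the block A_ij.\<close>
definition blk_off :: "(nat \<Rightarrow> nat) \<Rightarrow> nat \<Rightarrow> nat" where
  "blk_off d i = (\<Sum>k\<in>{1..<i}. d k)"

definition blk :: "real mat \<Rightarrow> (nat \<Rightarrow> nat) \<Rightarrow> nat \<Rightarrow> nat \<Rightarrow> real mat" where
  "blk A d i j = mat (d i) (d j) (\<lambda>(r, c). A $$ (blk_off d i + r, blk_off d j + c))"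

end

theory Submission imports Defs begin

lemma quad:
  assumes "M \<in> carrier_mat D D" "z \<in> carrier_vec D"
  shows "z \<bullet> (M *\<^sub>v z) = (\<Sum>r<D. \<Sum>c<D. z$r * M$$(r,c) * z$c)"
  using assms
  by (auto simp: scalar_prod_def row_def sum_distrib_left atLeast0LessThan mult.assoc mult.left_commute intro!: sum.cong)

lemma split_sum: "(\<Sum>r<a+b. f r) = (\<Sum>r<a. f r) + (\<Sum>t<b. f (a+t::nat)::real)"
  by (induction b) auto

lemma off_Suc: "m \<ge> 1 \<Longrightarrow> blk_off d (Suc m) = blk_off d m + d m"
  unfolding blk_off_def by (simp add: atLeastLessThanSuc add.commute)

lemma blocks_sum: "(\<Sum>r<blk_off d (Suc m). f r) = (\<Sum>k\<in>{1..m}. \<Sum>t<d k. f (blk_off d k + t)::real)"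
proof (induction m)
  case 0 then show ?case by (simp add: blk_off_def)
next
  case (Suc m)
  have "blk_off d (Suc (Suc m)) = blk_off d (Suc m) + d (Suc m)" by (rule off_Suc) simp
  then have "(\<Sum>r<blk_off d (Suc (Suc m)). f r) = (\<Sum>r<blk_off d (Suc m). f r) + (\<Sum>t<d (Suc m). f (blk_off d (Suc m) + t))"
    by (simp only: split_sum)
  then show ?case using Suc by (simp add: atLeastAtMostSuc_conv)
qed

lemma total_off: "(\<Sum>k\<in>{1..n}. d k) = blk_off d (Suc n)"
  unfolding blk_off_def by (simp add: atLeastLessThanSuc_atLeastAtMost)

lemma diag_id: "n \<ge> 1 \<Longrightarrow> (\<Sum>i\<in>{1..<n}. f i + f (Suc i)) + f 1 + f n = 2 * (\<Sum>i\<in>{1..n}. f i::real)"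
proof (induction n rule: nat_induct_at_least)
  case base then show ?case by simp
next
  case (Suc n) then show ?case by (simp add: atLeastAtMostSuc_conv)
qed

lemma tri_sum:
  assumes z: "\<And>i j. i \<in> {1..N} \<Longrightarrow> j \<in> {1..N} \<Longrightarrow> i + 1 < j \<or> j + 1 < i \<Longrightarrow> B i j = (0::real)"
  shows "n \<le> N \<Longrightarrow> (\<Sum>i\<in>{1..n}. \<Sum>j\<in>{1..n}. B i j) = (\<Sum>i\<in>{1..n}. B i i) + (\<Sum>i\<in>{1..<n}. B i (Suc i) + B (Suc i) i)"
proof (induction n)
  case 0 then show ?case by simp
next
  case (Suc n)
  have r: "(\<Sum>j\<in>{1..n}. B (Suc n) j) = (if n \<ge> 1 then B (Suc n) n else 0)"
   and c: "(\<Sum>j\<in>{1..n}. B j (Suc n)) = (if n \<ge> 1 then B n (Suc n) else 0)"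
  proof -
    have "(\<Sum>j\<in>{1..<n}. B (Suc n) j) = 0" "(\<Sum>j\<in>{1..<n}. B j (Suc n)) = 0"
      using Suc.prems by (auto intro!: sum.neutral z)
    moreover have "n \<ge> 1 \<Longrightarrow> {1..n} = insert n {1..<n}" by auto
    ultimately show "(\<Sum>j\<in>{1..n}. B (Suc n) j) = (if n \<ge> 1 then B (Suc n) n else 0)"
      "(\<Sum>j\<in>{1..n}. B j (Suc n)) = (if n \<ge> 1 then B n (Suc n) else 0)" by auto
  qed
  have "(\<Sum>i\<in>{1..Suc n}. \<Sum>j\<in>{1..Suc n}. B i j) = (\<Sum>i\<in>{1..n}. \<Sum>j\<in>{1..n}. B i j)
     + (\<Sum>j\<in>{1..n}. B j (Suc n)) + (\<Sum>j\<in>{1..n}. B (Suc n) j) + B (Suc n) (Suc n)"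
    by (simp add: atLeastAtMostSuc_conv sum.distrib)
  then show ?case using Suc r c
    by (cases "n \<ge> 1") (auto simp: atLeastAtMostSuc_conv atLeastLessThanSuc)
qed

lemma blk_idx: "t < d i \<Longrightarrow> s < d j \<Longrightarrow> blk A d i j $$ (t,s) = A $$ (blk_off d i + t, blk_off d j + s)"
  unfolding blk_def by (rule trans[OF index_mat(1)]) auto

lemma blk_dims[simp]: "dim_row (blk A d i j) = d i" "dim_col (blk A d i j) = d j"
  unfolding blk_def by simp_all

lemma blk_carrier: "blk A d i j \<in> carrier_mat (d i) (d j)"
  unfolding carrier_mat_def by simp

lemma pos_defD: "pos_def M \<Longrightarrow> M \<in> carrier_mat D D \<Longrightarrow> y \<in> carrier_vec D \<Longrightarrow> y \<noteq> 0\<^sub>v D \<Longrightarrow> y \<bullet> (M *\<^sub>v y) > 0"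
  unfolding pos_def_def carrier_mat_def by blast

lemma diag_pos:
  assumes "pos_def (blk A d k k)"
  shows "(\<Sum>t<d k. \<Sum>s<d k. w t * A$$(blk_off d k+t, blk_off d k+s) * w s) \<ge> 0"
    and "\<exists>t<d k. w t \<noteq> 0 \<Longrightarrow> (\<Sum>t<d k. \<Sum>s<d k. w t * A$$(blk_off d k+t, blk_off d k+s) * w s) > 0"
proof -
  let ?v = "vec (d k) w"
  have vc: "?v \<in> carrier_vec (d k)" by simp
  have "?v \<bullet> (blk A d k k *\<^sub>v ?v) = (\<Sum>t<d k. \<Sum>s<d k. ?v $ t * blk A d k k $$ (t,s) * ?v $ s)"
    by (rule quad[OF blk_carrier[of A d k k] vc])
  also have "\<dots> = (\<Sum>t<d k. \<Sum>s<d k. w t * A$$(blk_off d k+t, blk_off d k+s) * w s)"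
    by (intro sum.cong refl) (simp add: blk_idx)
  finally have e: "?v \<bullet> (blk A d k k *\<^sub>v ?v) = (\<Sum>t<d k. \<Sum>s<d k. w t * A$$(blk_off d k+t, blk_off d k+s) * w s)" .
  have pd: "?v \<noteq> 0\<^sub>v (d k) \<Longrightarrow> ?v \<bullet> (blk A d k k *\<^sub>v ?v) > 0"
    by (rule pos_defD[OF assms blk_carrier[of A d k k] vc])
  have nz: "\<exists>t<d k. w t \<noteq> 0 \<Longrightarrow> ?v \<noteq> 0\<^sub>v (d k)"
  proof
    assume "\<exists>t<d k. w t \<noteq> 0" "?v = 0\<^sub>v (d k)"
    then obtain t where "t < d k" "w t \<noteq> 0" "?v $ t = 0\<^sub>v (d k) $ t" by auto
    then show False by simp
  qed
  show "\<exists>t<d k. w t \<noteq> 0 \<Longrightarrow> (\<Sum>t<d k. \<Sum>s<d k. w t * A$$(blk_off d k+t, blk_off d k+s) * w s) > 0"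
    using nz pd e by simp
  show "(\<Sum>t<d k. \<Sum>s<d k. w t * A$$(blk_off d k+t, blk_off d k+s) * w s) \<ge> 0"
  proof (cases "\<exists>t<d k. w t \<noteq> 0")
    case True
    then show ?thesis using nz pd e by simp
  next
    case False then show ?thesis by simp
  qed
qed

lemma four_idx:
  fixes a b :: nat and X Y Z W :: "real mat"
  assumes "X \<in> carrier_mat a a" "Y \<in> carrier_mat a b" "Z \<in> carrier_mat b a" "W \<in> carrier_mat b b"
  shows "t < a \<Longrightarrow> s < a \<Longrightarrow> four_block_mat X Y Z W $$ (t, s) = X $$ (t,s)"
    "t < a \<Longrightarrow> s < b \<Longrightarrow> four_block_mat X Y Z W $$ (t, a + s) = Y $$ (t,s)"
    "t < b \<Longrightarrow> s < a \<Longrightarrow> four_block_mat X Y Z W $$ (a + t, s) = Z $$ (t,s)"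
    "t < b \<Longrightarrow> s < b \<Longrightarrow> four_block_mat X Y Z W $$ (a + t, a + s) = W $$ (t,s)"
  using assms by (subst index_mat_four_block; auto)+

lemma pair_pos:
  assumes "pos_def (four_block_mat (blk A d i i) (2 \<cdot>\<^sub>m blk A d i j) (2 \<cdot>\<^sub>m blk A d j i) (blk A d j j))"
  defines "S \<equiv> \<lambda>a b wa wb. (\<Sum>t<d a. \<Sum>s<d b. wa t * A$$(blk_off d a+t, blk_off d b+s) * wb s)"
  shows "S i i w1 w1 + S j j w2 w2 + 2 * (S i j w1 w2 + S j i w2 w1) \<ge> 0"
    and "\<exists>t<d i. w1 t \<noteq> 0 \<Longrightarrow> S i i w1 w1 + S j j w2 w2 + 2 * (S i j w1 w2 + S j i w2 w1) > 0"
proof -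
  let ?M = "four_block_mat (blk A d i i) (2 \<cdot>\<^sub>m blk A d i j) (2 \<cdot>\<^sub>m blk A d j i) (blk A d j j)"
  let ?z = "vec (d i + d j) (\<lambda>r. if r < d i then w1 r else w2 (r - d i))"
  have c1: "2 \<cdot>\<^sub>m blk A d i j \<in> carrier_mat (d i) (d j)" "2 \<cdot>\<^sub>m blk A d j i \<in> carrier_mat (d j) (d i)"
    by (simp_all add: blk_carrier)
  note fi = four_idx[OF blk_carrier[of A d i i] c1 blk_carrier[of A d j j]]
  have Mc: "?M \<in> carrier_mat (d i + d j) (d i + d j)" using four_block_carrier_mat[OF blk_carrier[of A d i i] blk_carrier[of A d j j]] .
  have zc: "?z \<in> carrier_vec (d i + d j)" by simp
  define g where "g = (\<lambda>r c. ?z $ r * ?M $$ (r,c) * ?z $ c)"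
  have "?z \<bullet> (?M *\<^sub>v ?z) = (\<Sum>r<d i + d j. \<Sum>c<d i + d j. g r c)"
    unfolding g_def by (rule quad[OF Mc zc])
  also have "\<dots> = (\<Sum>r<d i. \<Sum>c<d i. g r c) + (\<Sum>r<d i. \<Sum>c<d j. g r (d i + c))
     + ((\<Sum>r<d j. \<Sum>c<d i. g (d i + r) c) + (\<Sum>r<d j. \<Sum>c<d j. g (d i + r) (d i + c)))"
    by (simp only: split_sum sum.distrib)
  also have "(\<Sum>r<d i. \<Sum>c<d i. g r c) = S i i w1 w1"
    unfolding S_def g_def by (intro sum.cong refl) (simp add: fi blk_idx)
  also have "(\<Sum>r<d i. \<Sum>c<d j. g r (d i + c)) = 2 * S i j w1 w2"
    unfolding S_def g_def sum_distrib_left by (intro sum.cong refl) (simp add: fi blk_idx)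
  also have "(\<Sum>r<d j. \<Sum>c<d i. g (d i + r) c) = 2 * S j i w2 w1"
    unfolding S_def g_def sum_distrib_left by (intro sum.cong refl) (simp add: fi blk_idx)
  also have "(\<Sum>r<d j. \<Sum>c<d j. g (d i + r) (d i + c)) = S j j w2 w2"
    unfolding S_def g_def by (intro sum.cong refl) (simp add: fi blk_idx)
  finally have e: "?z \<bullet> (?M *\<^sub>v ?z) = S i i w1 w1 + S j j w2 w2 + 2 * (S i j w1 w2 + S j i w2 w1)"
    by (simp add: algebra_simps)
  have pd: "?z \<noteq> 0\<^sub>v (d i + d j) \<Longrightarrow> ?z \<bullet> (?M *\<^sub>v ?z) > 0"
    by (rule pos_defD[OF assms(1) Mc zc])
  show "\<exists>t<d i. w1 t \<noteq> 0 \<Longrightarrow> S i i w1 w1 + S j j w2 w2 + 2 * (S i j w1 w2 + S j i w2 w1) > 0"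
  proof -
    assume "\<exists>t<d i. w1 t \<noteq> 0"
    then obtain t where t: "t < d i" "w1 t \<noteq> 0" by auto
    have "?z \<noteq> 0\<^sub>v (d i + d j)"
    proof
      assume "?z = 0\<^sub>v (d i + d j)"
      then have "?z $ t = 0\<^sub>v (d i + d j) $ t" by simp
      then show False using t by simp
    qed
    then show ?thesis using pd e by simp
  qed
  show "S i i w1 w1 + S j j w2 w2 + 2 * (S i j w1 w2 + S j i w2 w1) \<ge> 0"
  proof (cases "?z = 0\<^sub>v (d i + d j)")
    case False then show ?thesis using pd e by simp
  next
    case True
    have z1: "\<forall>t<d i. w1 t = 0"
    proof (intro allI impI)
      fix t assume "t < d i"
      then have "?z $ t = 0" using True by simp
      then show "w1 t = 0" using \<open>t < d i\<close> by simp
    qed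
    have z2: "\<forall>t<d j. w2 t = 0"
    proof (intro allI impI)
      fix t assume "t < d j"
      then have "?z $ (d i + t) = 0" using True by simp
      then show "w2 t = 0" using \<open>t < d j\<close> by simp
    qed
    show ?thesis using z1 z2 by (simp add: S_def)
  qed
qed

lemma find_block: "r < blk_off d (Suc m) \<Longrightarrow> \<exists>k\<in>{1..m}. \<exists>t<d k. r = blk_off d k + t"
proof (induction m)
  case 0 then show ?case by (simp add: blk_off_def)
next
  case (Suc m)
  have o: "blk_off d (Suc (Suc m)) = blk_off d (Suc m) + d (Suc m)" by (rule off_Suc) simp
  show ?case
  proof (cases "r < blk_off d (Suc m)")
    case True then show ?thesis using Suc.IH by force
  next
    case False
    then have "r - blk_off d (Suc m) < d (Suc m)" "r = blk_off d (Suc m) + (r - blk_off d (Suc m))"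
      using Suc.prems o by auto
    then show ?thesis by force
  qed
qed

theorem mainTheorem7:
  fixes A :: "real mat" and d :: "nat \<Rightarrow> nat" and n :: nat
  assumes n2: "n \<ge> 2"
    and dimA: "A \<in> carrier_mat (\<Sum>k\<in>{1..n}. d k) (\<Sum>k\<in>{1..n}. d k)"
    and tridiag: "\<And>i j. i \<in> {1..n} \<Longrightarrow> j \<in> {1..n} \<Longrightarrow> i + 1 < j \<or> j + 1 < i \<Longrightarrow>
                  blk A d i j = 0\<^sub>m (d i) (d j)"
    and first: "pos_def (blk A d 1 1)"
    and last: "pos_def (blk A d n n)"
    and pairs: "\<And>i. i \<in> {1..n - 1} \<Longrightarrow>
       pos_def (four_block_mat (blk A d i i) (2 \<cdot>\<^sub>m blk A d i (i + 1))
                               (2 \<cdot>\<^sub>m blk A d (i + 1) i) (blk A d (i + 1) (i + 1)))"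
  shows "pos_def A"
proof -
  define N where "N = blk_off d (Suc n)"
  have AN: "A \<in> carrier_mat N N" unfolding N_def total_off[symmetric] by (rule dimA)
  have "\<forall>y \<in> carrier_vec N. y \<noteq> 0\<^sub>v N \<longrightarrow> y \<bullet> (A *\<^sub>v y) > 0"
  proof (intro ballI impI)
    fix y :: "real vec" assume yN: "y \<in> carrier_vec N" and y0: "y \<noteq> 0\<^sub>v N"
    define w where "w = (\<lambda>k t. y $ (blk_off d k + t))"
    define B where "B = (\<lambda>i j. \<Sum>t<d i. \<Sum>s<d j. w i t * A$$(blk_off d i+t, blk_off d j+s) * w j s)"
    define P where "P = (\<lambda>i. B i i + B (Suc i) (Suc i) + 2 * (B i (Suc i) + B (Suc i) i))"
    have "y \<bullet> (A *\<^sub>v y) = (\<Sum>r<N. \<Sum>c<N. y$r * A$$(r,c) * y$c)" by (rule quad[OF AN yN])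
    also have "\<dots> = (\<Sum>i\<in>{1..n}. \<Sum>t<d i. \<Sum>j\<in>{1..n}. \<Sum>s<d j. w i t * A$$(blk_off d i+t, blk_off d j+s) * w j s)"
      unfolding N_def w_def by (simp only: blocks_sum)
    also have "\<dots> = (\<Sum>i\<in>{1..n}. \<Sum>j\<in>{1..n}. B i j)"
      unfolding B_def by (rule sum.cong[OF refl], rule sum.swap)
    also have "\<dots> = (\<Sum>i\<in>{1..n}. B i i) + (\<Sum>i\<in>{1..<n}. B i (Suc i) + B (Suc i) i)"
    proof (rule tri_sum[of n])
      fix i j assume ij: "i \<in> {1..n}" "j \<in> {1..n}" "i + 1 < j \<or> j + 1 < i"
      have "\<And>t s. t < d i \<Longrightarrow> s < d j \<Longrightarrow> A$$(blk_off d i+t, blk_off d j+s) = 0"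
        using tridiag[OF ij] blk_idx[of _ d i _ j A] by (metis index_zero_mat(1))
      then show "B i j = 0" unfolding B_def by simp
    qed simp
    finally have Q: "y \<bullet> (A *\<^sub>v y) = (\<Sum>i\<in>{1..n}. B i i) + (\<Sum>i\<in>{1..<n}. B i (Suc i) + B (Suc i) i)" .
    have "(\<Sum>i\<in>{1..<n}. P i) = (\<Sum>i\<in>{1..<n}. B i i + B (Suc i) (Suc i)) + 2 * (\<Sum>i\<in>{1..<n}. B i (Suc i) + B (Suc i) i)"
      unfolding P_def by (simp add: sum.distrib sum_distrib_left)
    then have Q2: "2 * (y \<bullet> (A *\<^sub>v y)) = B 1 1 + B n n + (\<Sum>i\<in>{1..<n}. P i)"
      using Q diag_id[of n "\<lambda>i. B i i"] n2 by simp
    have Pnn: "\<And>i. i \<in> {1..<n} \<Longrightarrow> P i \<ge> 0"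
      and Ppos: "\<And>i. i \<in> {1..<n} \<Longrightarrow> \<exists>t<d i. w i t \<noteq> 0 \<Longrightarrow> P i > 0"
    proof -
      fix i assume i: "i \<in> {1..<n}"
      then have pi: "pos_def (four_block_mat (blk A d i i) (2 \<cdot>\<^sub>m blk A d i (Suc i))
                               (2 \<cdot>\<^sub>m blk A d (Suc i) i) (blk A d (Suc i) (Suc i)))"
        using pairs[of i] by auto
      show "P i \<ge> 0" using pair_pos(1)[OF pi, of "w i" "w (Suc i)"] unfolding P_def B_def by simp
      show "\<exists>t<d i. w i t \<noteq> 0 \<Longrightarrow> P i > 0"
        using pair_pos(2)[OF pi, of "w i" "w (Suc i)"] unfolding P_def B_def by simp
    qed
    have B1: "B 1 1 \<ge> 0" using diag_pos(1)[OF first, of "w 1"] unfolding B_def by simp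
    have Bn: "B n n \<ge> 0" using diag_pos(1)[OF last, of "w n"] unfolding B_def by simp
    have Bnp: "\<exists>t<d n. w n t \<noteq> 0 \<Longrightarrow> B n n > 0"
      using diag_pos(2)[OF last, of "w n"] unfolding B_def by simp
    have Snn: "(\<Sum>i\<in>{1..<n}. P i) \<ge> 0" by (rule sum_nonneg) (rule Pnn)
    obtain r where r: "r < N" "y $ r \<noteq> 0" using y0 yN by (auto simp: vec_eq_iff)
    then obtain k t where k: "k \<in> {1..n}" "t < d k" "r = blk_off d k + t"
      using find_block[of r d n] unfolding N_def by auto
    have wk: "w k t \<noteq> 0" using r k unfolding w_def by simp
    have "2 * (y \<bullet> (A *\<^sub>v y)) > 0"
    proof (cases "k = n")
      case True
      then show ?thesis using Q2 Bnp wk k B1 Snn by force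
    next
      case False
      then have kk: "k \<in> {1..<n}" using k by auto
      have "P k \<le> (\<Sum>i\<in>{1..<n}. P i)" by (rule member_le_sum[OF kk]) (use Pnn in auto)
      then show ?thesis using Q2 Ppos[OF kk] wk k B1 Bn by force
    qed
    then show "y \<bullet> (A *\<^sub>v y) > 0" by simp
  qed
  then show ?thesis unfolding pos_def_def using AN by simp
qed

end
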